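(* Assume the setting in the context, that the reward $r$ is $L_r$-Lipschitz on $\mathcal S\times\mathcal A$, and that the policy satisfies $W_2(\pi(\cdot\mid s),\pi(\cdot\mid s'))\le L_\pi\|s-s'\|$ for all $s,s'\in\mathcal S$. Then $$|\eta-\tilde\eta^{\mathrm{opc}}|\le L_r\sqrt{1+L_\pi^2}\sum_{t=0}^{T}\gamma^t\,W_2\big(\mathcal L(\hat s_t),\mathcal L(s_t)\big),$$ where $\mathcal L(\cdot)$ denotes the law (marginal distribution) of a random variable.
   Context: Setting: state space $\mathcal S\subseteq\mathbb R^{n_s}$, action space $\mathcal A\subseteq\mathbb R^{n_a}$, both with the Euclidean norm, and $\mathcal S\times\mathcal A$ normed by $\|(s,a)\|^2=\|s\|^2+\|a\|^2$. The true environment is given by a Markov transition kernel $p(\cdot\mid s,a)$ on $\mathcal S$, an initial distribution $\rho$ on $\mathcal S$, a reward $r:\mathcal S\times\mathcal A\to\mathbb R$, a discount $\gamma\in[0,1)$ and a horizon $T\in\mathbb N$. A (stochastic) policy is a Markov kernel $\pi(\cdot\mid s)$ from $\mathcal S$ to $\mathcal A$. A reference trajectory $(\hat s_t,\hat a_t)_{t=0}^T$ is generated by $\hat s_0\sim\rho$, $\hat a_t\sim\pi(\cdot\mid\hat s_t)$, $\hat s_{t+1}\sim p(\cdot\mid\hat s_t,\hat a_t)$, and the true expected return is $\eta=\mathbb E[\sum_{t=0}^T\gamma^t r(\hat s_t,\hat a_t)]$. Let $\tilde f:\mathcal S\times\mathcal A\to\mathbb R^{n_s}$ be a given function (the mean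 transition of a learned model). The generalized on-policy-corrections (OPC) rollout is defined jointly with the reference trajectory by $s_0=\hat s_0$ and, for each $t$, $a_t\sim\pi(\cdot\mid s_t)$ drawn independently of all other randomness given $s_t$, and $s_{t+1}=\hat s_{t+1}+\tilde f(s_t,a_t)-\tilde f(\hat s_t,\hat a_t)$ (assumed to lie in $\mathcal S$). Its expected return is $\tilde\eta^{\mathrm{opc}}=\mathbb E[\sum_{t=0}^T\gamma^t r(s_t,a_t)]$. All distributions involved are assumed to have finite second moments. $W_2$ denotes the 2-Wasserstein distance with respect to the Euclidean norm. *)

theory Defs
  imports "HOL-Probability.Probability"
begin

definition couplings :: "'x::euclidean_space measure \<Rightarrow> 'x measure \<Rightarrow> ('x \<times> 'x) measure set" where
  "couplings \<mu> \<nu> = {c. prob_space c \<and> sets c = sets (borel \<Otimes>\<^sub>M borel)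
      \<and> distr c borel fst = \<mu> \<and> distr c borel snd = \<nu>}"

text \<open>W2(mu,nu) = sqrt( inf over couplings of E ||X - Y||^2 ).  For measures with
  finite second moments the infimum is finite.\<close>
definition W2 :: "'x::euclidean_space measure \<Rightarrow> 'x measure \<Rightarrow> real" where
  "W2 \<mu> \<nu> = sqrt (enn2real (INF c\<in>couplings \<mu> \<nu>.
      \<integral>\<^sup>+ z. ennreal ((dist (fst z) (snd z))\<^sup>2) \<partial>c))"

text \<open>A point ((sh, ah), (s, a)) is the time-t tuple (reference state, reference action,
  OPC state, OPC action).  The tuple process is a Markov chain; opc_joint t is its law.\<close>

definition opc_init :: "'s::euclidean_space measure \<Rightarrow> ('s \<Rightarrow> 'a::euclidean_space measure)
    \<Rightarrow> (('s \<times> 'a) \<times> ('s \<times> 'a)) measure" where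
  "opc_init \<rho> \<pi> = \<rho> \<bind> (\<lambda>s0. distr (\<pi> s0 \<Otimes>\<^sub>M \<pi> s0) borel (\<lambda>(ah, a). ((s0, ah), (s0, a))))"

definition opc_step :: "('s::euclidean_space \<Rightarrow> 'a::euclidean_space measure)
    \<Rightarrow> ('s \<times> 'a \<Rightarrow> 's measure) \<Rightarrow> ('s \<times> 'a \<Rightarrow> 's)
    \<Rightarrow> (('s \<times> 'a) \<times> ('s \<times> 'a)) measure \<Rightarrow> (('s \<times> 'a) \<times> ('s \<times> 'a)) measure" where
  "opc_step \<pi> p f J = J \<bind> (\<lambda>((sh, ah), (s, a)).
      p (sh, ah) \<bind> (\<lambda>sh'. let s' = sh' + f (s, a) - f (sh, ah) in
        distr (\<pi> sh' \<Otimes>\<^sub>M \<pi> s') borel (\<lambda>(ah', a'). ((sh', ah'), (s', a')))))"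

primrec opc_joint :: "'s::euclidean_space measure \<Rightarrow> ('s \<Rightarrow> 'a::euclidean_space measure)
    \<Rightarrow> ('s \<times> 'a \<Rightarrow> 's measure) \<Rightarrow> ('s \<times> 'a \<Rightarrow> 's) \<Rightarrow> nat
    \<Rightarrow> (('s \<times> 'a) \<times> ('s \<times> 'a)) measure" where
  "opc_joint \<rho> \<pi> p f 0 = opc_init \<rho> \<pi>"
| "opc_joint \<rho> \<pi> p f (Suc t) = opc_step \<pi> p f (opc_joint \<rho> \<pi> p f t)"

definition true_return where
  "true_return \<rho> \<pi> p f r \<gamma> T =
     (\<Sum>t\<le>T. \<gamma> ^ t * (\<integral>z. r (fst z) \<partial>opc_joint \<rho> \<pi> p f t))"

definition opc_return where
  "opc_return \<rho> \<pi> p f r \<gamma> T =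
     (\<Sum>t\<le>T. \<gamma> ^ t * (\<integral>z. r (snd z) \<partial>opc_joint \<rho> \<pi> p f t))"

definition law_ref_state where
  "law_ref_state \<rho> \<pi> p f t = distr (opc_joint \<rho> \<pi> p f t) borel (\<lambda>z. fst (fst z))"

definition law_opc_state where
  "law_opc_state \<rho> \<pi> p f t = distr (opc_joint \<rho> \<pi> p f t) borel (\<lambda>z. fst (snd z))"

end

theory Submission
  imports Defs
begin


lemma lip_abs:
  fixes G :: "'x::metric_space \<Rightarrow> real"
  shows "K-lipschitz_on U G \<Longrightarrow> x \<in> U \<Longrightarrow> y \<in> U \<Longrightarrow> \<bar>G x - G y\<bar> \<le> K * dist x y"
  using lipschitz_onD[of K U G x y] by (simp add: dist_real_def)

lemma lip_integrable:
  fixes G :: "'x::euclidean_space \<Rightarrow> real"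
  assumes "prob_space M" "sets M = sets borel" "integrable M (\<lambda>x. (norm x)\<^sup>2)"
    "AE x in M. x \<in> U" "K-lipschitz_on U G" "G \<in> borel_measurable borel"
  shows "integrable M G"
proof -
  interpret prob_space M by fact
  have "U \<noteq> {}"
  proof
    assume "U = {}" then have "AE x in M. False" using assms(4) by simp
    then show False by (simp add: AE_False)
  qed
  then obtain u where u: "u \<in> U" by auto
  have K: "0 \<le> K" using assms(5) lipschitz_on_nonneg by blast
  have meas[measurable]: "G \<in> borel_measurable M"
    using assms(6) measurable_cong_sets[OF assms(2) refl] by blast
  have nm: "norm x \<le> 1 + (norm x)\<^sup>2" for x :: 'x
    by (smt (verit) norm_ge_zero power2_eq_square mult_le_cancel_left1 zero_le_square)
  show ?thesis
  proof (rule Bochner_Integration.integrable_bound[where f="\<lambda>x. \<bar>G u\<bar> + K * norm u + K + K * (norm x)\<^sup>2"])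
    show "integrable M (\<lambda>x. \<bar>G u\<bar> + K * norm u + K + K * (norm x)\<^sup>2)"
      using assms(3) by auto
    show "G \<in> borel_measurable M" by (rule meas)
    show "AE x in M. norm (G x) \<le> norm (\<bar>G u\<bar> + K * norm u + K + K * (norm x)\<^sup>2)"
      using assms(4)
    proof eventually_elim
      case (elim x)
      have "\<bar>G x - G u\<bar> \<le> K * dist x u" using lip_abs[OF assms(5) elim u] .
      also have "dist x u \<le> norm x + norm u" by (simp add: dist_norm norm_triangle_ineq4)
      finally have "\<bar>G x\<bar> \<le> \<bar>G u\<bar> + K * (norm x + norm u)"
        using K by (smt (verit) mult_left_mono)
      also have "\<dots> \<le> \<bar>G u\<bar> + K * norm u + K + K * (norm x)\<^sup>2"
        using mult_left_mono[OF nm[of x] K] by (simp add: algebra_simps)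
      finally show ?case using K by simp
    qed
  qed
qed

lemma sets_borel_pair: "sets (borel \<Otimes>\<^sub>M borel) = sets (borel :: ('x::second_countable_topology \<times> 'y::second_countable_topology) measure)"
  by (subst borel_prod) (rule refl)

lemma prob_jensen_sq:
  fixes X :: "'a \<Rightarrow> real"
  assumes "prob_space M" "integrable M X" "integrable M (\<lambda>x. (X x)\<^sup>2)"
  shows "(integral\<^sup>L M X)\<^sup>2 \<le> integral\<^sup>L M (\<lambda>x. (X x)\<^sup>2)"
proof -
  interpret prob_space M by fact
  have "0 \<le> variance X" by (rule integral_nonneg_AE) auto
  then show ?thesis using variance_eq[OF assms(2,3)] by simp
qed

lemma coupling_bound:
  fixes G :: "'x::euclidean_space \<Rightarrow> real"
  assumes c: "c \<in> couplings \<mu> \<nu>"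
    and mu2: "integrable \<mu> (\<lambda>x. (norm x)\<^sup>2)" and nu2: "integrable \<nu> (\<lambda>x. (norm x)\<^sup>2)"
    and U: "U \<in> sets borel"
    and muU: "AE x in \<mu>. x \<in> U" and nuU: "AE x in \<nu>. x \<in> U"
    and lip: "K-lipschitz_on U G" and Gm: "G \<in> borel_measurable borel"
  shows "integrable c (\<lambda>z. (dist (fst z) (snd z))\<^sup>2)"
    "\<bar>integral\<^sup>L \<mu> G - integral\<^sup>L \<nu> G\<bar> \<le> K * sqrt (\<integral>z. (dist (fst z) (snd z))\<^sup>2 \<partial>c)"
proof -
  have pc: "prob_space c" and sc: "sets c = sets (borel \<Otimes>\<^sub>M borel)"
    and mu: "distr c borel fst = \<mu>" and nu: "distr c borel snd = \<nu>"
    using c by (auto simp: couplings_def)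
  interpret prob_space c by fact
  have K: "0 \<le> K" using lip lipschitz_on_nonneg by blast
  have [measurable]: "fst \<in> c \<rightarrow>\<^sub>M borel" "snd \<in> c \<rightarrow>\<^sub>M borel"
    using measurable_cong_sets[OF sc refl] by auto
  have Gc[measurable]: "G \<in> borel_measurable borel" by fact
  have pmu: "prob_space \<mu>" "sets \<mu> = sets borel"
    using mu[symmetric] by (auto intro!: prob_space_distr)
  have pnu: "prob_space \<nu>" "sets \<nu> = sets borel"
    using nu[symmetric] by (auto intro!: prob_space_distr)
  have iG1: "integrable c (\<lambda>z. G (fst z))"
    using lip_integrable[OF pmu mu2 muU lip Gm] unfolding mu[symmetric]
    by (subst (asm) integrable_distr_eq) auto
  have iG2: "integrable c (\<lambda>z. G (snd z))"
    using lip_integrable[OF pnu nu2 nuU lip Gm] unfolding nu[symmetric]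
    by (subst (asm) integrable_distr_eq) auto
  have in1: "integrable c (\<lambda>z. (norm (fst z))\<^sup>2)"
    using mu2 unfolding mu[symmetric] by (subst (asm) integrable_distr_eq) auto
  have in2: "integrable c (\<lambda>z. (norm (snd z))\<^sup>2)"
    using nu2 unfolding nu[symmetric] by (subst (asm) integrable_distr_eq) auto
  have ae1: "AE z in c. fst z \<in> U"
    using muU unfolding mu[symmetric] using U by (subst (asm) AE_distr_iff) auto
  have ae2: "AE z in c. snd z \<in> U"
    using nuU unfolding nu[symmetric] using U by (subst (asm) AE_distr_iff) auto
  have dsq: "(dist a b)\<^sup>2 \<le> 2 * (norm a)\<^sup>2 + 2 * (norm b)\<^sup>2" for a b :: 'x
  proof -
    have "dist a b \<le> norm a + norm b" by (simp add: dist_norm norm_triangle_ineq4)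
    then have "(dist a b)\<^sup>2 \<le> (norm a + norm b)\<^sup>2" by (simp add: power_mono)
    also have "\<dots> \<le> 2 * (norm a)\<^sup>2 + 2 * (norm b)\<^sup>2"
      by (smt (verit) sum_squares_bound zero_le_power2 power2_sum)
    finally show ?thesis .
  qed
  show isq: "integrable c (\<lambda>z. (dist (fst z) (snd z))\<^sup>2)"
    by (rule Bochner_Integration.integrable_bound[where f="\<lambda>z. 2 * (norm (fst z))\<^sup>2 + 2 * (norm (snd z))\<^sup>2"])
       (use in1 in2 dsq in auto)
  have nm: "t \<le> 1 + t\<^sup>2" for t :: real
    by (smt (verit) power2_eq_square mult_le_cancel_left1 zero_le_square)
  have id: "integrable c (\<lambda>z. dist (fst z) (snd z))"
    by (rule Bochner_Integration.integrable_bound[where f="\<lambda>z. 1 + (dist (fst z) (snd z))\<^sup>2"])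
       (use isq nm in auto)
  have "integral\<^sup>L \<mu> G = (\<integral>z. G (fst z) \<partial>c)" unfolding mu[symmetric]
    by (rule integral_distr) auto
  moreover have "integral\<^sup>L \<nu> G = (\<integral>z. G (snd z) \<partial>c)" unfolding nu[symmetric]
    by (rule integral_distr) auto
  ultimately have "\<bar>integral\<^sup>L \<mu> G - integral\<^sup>L \<nu> G\<bar> = \<bar>\<integral>z. G (fst z) - G (snd z) \<partial>c\<bar>"
    using iG1 iG2 by simp
  also have "\<dots> \<le> (\<integral>z. \<bar>G (fst z) - G (snd z)\<bar> \<partial>c)"
    by (rule integral_abs_bound)
  also have "\<dots> \<le> (\<integral>z. K * dist (fst z) (snd z) \<partial>c)"
    apply (rule integral_mono_AE)
    using iG1 iG2 id apply auto[2]
    using ae1 ae2 by eventually_elim (rule lip_abs[OF lip])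
  also have "\<dots> = K * (\<integral>z. dist (fst z) (snd z) \<partial>c)" by simp
  also have "(\<integral>z. dist (fst z) (snd z) \<partial>c) \<le> sqrt (\<integral>z. (dist (fst z) (snd z))\<^sup>2 \<partial>c)"
  proof -
    have "(\<integral>z. dist (fst z) (snd z) \<partial>c)\<^sup>2 \<le> (\<integral>z. (dist (fst z) (snd z))\<^sup>2 \<partial>c)"
      by (rule prob_jensen_sq[OF pc id isq])
    then show ?thesis by (simp add: real_le_rsqrt)
  qed
  then have "K * (\<integral>z. dist (fst z) (snd z) \<partial>c) \<le> K * sqrt (\<integral>z. (dist (fst z) (snd z))\<^sup>2 \<partial>c)"
    using K by (rule mult_left_mono)
  finally show "\<bar>integral\<^sup>L \<mu> G - integral\<^sup>L \<nu> G\<bar> \<le> K * sqrt (\<integral>z. (dist (fst z) (snd z))\<^sup>2 \<partial>c)" .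
qed

lemma product_coupling:
  fixes \<mu> \<nu> :: "'x::euclidean_space measure"
  assumes pm: "prob_space \<mu>" "sets \<mu> = sets borel" and pn: "prob_space \<nu>" "sets \<nu> = sets borel"
  shows "\<mu> \<Otimes>\<^sub>M \<nu> \<in> couplings \<mu> \<nu>"
proof -
  interpret m: prob_space \<mu> by fact
  interpret n: prob_space \<nu> by fact
  have s: "sets (\<mu> \<Otimes>\<^sub>M \<nu>) = sets (borel \<Otimes>\<^sub>M borel)"
    using pm(2) pn(2) by (rule sets_pair_measure_cong)
  have d1: "distr (\<mu> \<Otimes>\<^sub>M \<nu>) borel fst = \<mu>"
  proof -
    have "distr (\<mu> \<Otimes>\<^sub>M \<nu>) borel fst = distr (\<mu> \<Otimes>\<^sub>M \<nu>) \<mu> fst"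
      by (rule distr_cong) (use pm in auto)
    also have "\<dots> = \<mu>" by (rule n.distr_pair_fst)
    finally show ?thesis .
  qed
  have d2: "distr (\<mu> \<Otimes>\<^sub>M \<nu>) borel snd = \<nu>"
  proof (rule measure_eqI)
    show "sets (distr (\<mu> \<Otimes>\<^sub>M \<nu>) borel snd) = sets \<nu>" using pn by simp
    fix A assume "A \<in> sets (distr (\<mu> \<Otimes>\<^sub>M \<nu>) borel snd)"
    then have A: "A \<in> sets \<nu>" using pn by simp
    have ms: "snd \<in> \<mu> \<Otimes>\<^sub>M \<nu> \<rightarrow>\<^sub>M borel"
      using measurable_snd measurable_cong_sets[OF refl pn(2)] by blast
    have "emeasure (distr (\<mu> \<Otimes>\<^sub>M \<nu>) borel snd) A = emeasure (\<mu> \<Otimes>\<^sub>M \<nu>) (snd -` A \<inter> space (\<mu> \<Otimes>\<^sub>M \<nu>))"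
      using A pn(2) by (subst emeasure_distr[OF ms]) auto
    also have "snd -` A \<inter> space (\<mu> \<Otimes>\<^sub>M \<nu>) = space \<mu> \<times> A"
      using sets.sets_into_space[OF A] by (auto simp: space_pair_measure)
    also have "emeasure (\<mu> \<Otimes>\<^sub>M \<nu>) (space \<mu> \<times> A) = emeasure \<mu> (space \<mu>) * emeasure \<nu> A"
      using A by (intro n.emeasure_pair_measure_Times) auto
    finally show "emeasure (distr (\<mu> \<Otimes>\<^sub>M \<nu>) borel snd) A = emeasure \<nu> A"
      by (simp add: m.emeasure_space_1)
  qed
  show ?thesis unfolding couplings_def using s d1 d2 prob_space_pair[OF pm(1) pn(1)] by auto
qed

lemma coupling_cost_integrable:
  fixes \<mu> \<nu> :: "'x::euclidean_space measure"
  assumes c: "c \<in> couplings \<mu> \<nu>"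
    and mu2: "integrable \<mu> (\<lambda>x. (norm x)\<^sup>2)" and nu2: "integrable \<nu> (\<lambda>x. (norm x)\<^sup>2)"
  shows "integrable c (\<lambda>z. (dist (fst z) (snd z))\<^sup>2)"
  by (rule coupling_bound(1)[OF c mu2 nu2, of UNIV 0 "\<lambda>_. 0"]) (auto simp: lipschitz_on_def)

lemma W2_bound:
  fixes \<mu> \<nu> :: "'x::euclidean_space measure"
  assumes pm: "prob_space \<mu>" "sets \<mu> = sets borel" and pn: "prob_space \<nu>" "sets \<nu> = sets borel"
    and mu2: "integrable \<mu> (\<lambda>x. (norm x)\<^sup>2)" and nu2: "integrable \<nu> (\<lambda>x. (norm x)\<^sup>2)"
    and K: "0 \<le> K" and a: "0 \<le> a"
    and H: "\<And>c. c \<in> couplings \<mu> \<nu> \<Longrightarrow> X \<le> K * sqrt (a + (\<integral>z. (dist (fst z) (snd z))\<^sup>2 \<partial>c))"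
  shows "X \<le> K * sqrt (a + (W2 \<mu> \<nu>)\<^sup>2)"
proof -
  define C where "C = couplings \<mu> \<nu>"
  define cost where "cost c = (\<integral>z. (dist (fst z) (snd z))\<^sup>2 \<partial>c)" for c :: "('x \<times> 'x) measure"
  define F where "F c = (\<integral>\<^sup>+ z. ennreal ((dist (fst z) (snd z))\<^sup>2) \<partial>c)" for c :: "('x \<times> 'x) measure"
  define I where "I = (INF c\<in>C. F c)"
  have nn: "c \<in> C \<Longrightarrow> F c = ennreal (cost c)" for c
    unfolding cost_def C_def F_def
    by (rule nn_integral_eq_integral[OF coupling_cost_integrable[OF _ mu2 nu2]]) auto
  have cost_nn: "0 \<le> cost c" for c unfolding cost_def by (rule integral_nonneg_AE) auto
  define c0 where "c0 = \<mu> \<Otimes>\<^sub>M \<nu>"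
  have c0: "c0 \<in> C" unfolding c0_def C_def by (rule product_coupling[OF pm pn])
  have "I \<le> F c0" unfolding I_def using c0 by (rule INF_lower)
  then have "I \<le> ennreal (cost c0)" using nn[OF c0] by simp
  then have Ifin: "I < top" using ennreal_less_top order_le_less_trans by blast
  define w where "w = enn2real I"
  have Iw: "I = ennreal w" unfolding w_def using ennreal_enn2real[OF Ifin] by simp
  have w0: "0 \<le> w" unfolding w_def by (rule enn2real_nonneg)
  have "W2 \<mu> \<nu> = sqrt w" unfolding W2_def w_def I_def C_def F_def by (rule refl)
  then have W2w: "(W2 \<mu> \<nu>)\<^sup>2 = w" using w0 by simp
  have eps: "X \<le> K * sqrt (a + w + e)" if e: "0 < e" for e
  proof -
    have "ennreal w < ennreal (w + e)" using e w0 by (intro ennreal_lessI) auto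
    then have "I < ennreal (w + e)" unfolding Iw .
    then have "\<exists>c\<in>C. F c < ennreal (w + e)" unfolding I_def by (simp only: INF_less_iff)
    then obtain c where c: "c \<in> C" and lt: "F c < ennreal (w + e)" by (rule bexE)
    have "ennreal (cost c) < ennreal (w + e)" using lt unfolding nn[OF c] .
    then have "cost c < w + e" using ennreal_less_iff[OF cost_nn[of c], of "w + e"] by (rule iffD1[rotated])
    then have "sqrt (a + cost c) \<le> sqrt (a + w + e)" by (intro real_sqrt_le_mono) linarith
    then have "K * sqrt (a + cost c) \<le> K * sqrt (a + w + e)" using K by (rule mult_left_mono)
    moreover have "X \<le> K * sqrt (a + cost c)" using H[OF c[unfolded C_def]] unfolding cost_def .
    ultimately show ?thesis by linarith
  qed
  show ?thesis
  proof (rule ccontr)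
    assume "\<not> ?thesis"
    then have gt: "K * sqrt (a + w) < X" unfolding W2w by (simp only: not_le)
    have X1: "X \<le> K * sqrt (a + w + 1)" using eps[of 1] by simp
    have Kp: "0 < K"
    proof (rule ccontr)
      assume "\<not> 0 < K" then have "K = 0" using K by simp
      then show False using gt X1 by simp
    qed
    define q where "q = X / K"
    have q: "sqrt (a + w) < q" unfolding q_def using gt Kp by (simp add: pos_less_divide_eq mult.commute)
    have qp: "0 < q" using q real_sqrt_ge_zero[of "a + w"] a w0 by linarith
    have sq: "sqrt (q\<^sup>2) = q" using qp real_sqrt_abs[of q] by simp
    have "sqrt (a + w) < sqrt (q\<^sup>2)" using q unfolding sq .
    then have q2: "a + w < q\<^sup>2" by (simp only: real_sqrt_less_iff)
    define e where "e = (q\<^sup>2 - (a + w)) / 2"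
    have e2: "2 * e = q\<^sup>2 - (a + w)" unfolding e_def by simp
    have e: "0 < e" using e2 q2 by linarith
    have "X \<le> K * sqrt (a + w + e)" by (rule eps[OF e])
    then have "q \<le> sqrt (a + w + e)" unfolding q_def by (subst pos_divide_le_eq[OF Kp]) (metis mult.commute)
    moreover have "sqrt (a + w + e) < q"
    proof -
      have "a + w + e < q\<^sup>2" using q2 e2 by linarith
      then have "sqrt (a + w + e) < sqrt (q\<^sup>2)" by (simp only: real_sqrt_less_iff)
      then show ?thesis unfolding sq .
    qed
    ultimately show False by linarith
  qed
qed

lemma ennreal_abs_split: "ennreal \<bar>t\<bar> = ennreal t + ennreal (- t)"
  by (cases "0 \<le> t") (auto simp: ennreal_neg)

lemma integral_bind_real:
  fixes f :: "'b \<Rightarrow> real"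
  assumes N: "N \<in> M \<rightarrow>\<^sub>M prob_algebra B" and f[measurable]: "f \<in> borel_measurable B"
    and Mne: "space M \<noteq> {}" and int: "integrable (M \<bind> N) f"
  shows "integral\<^sup>L (M \<bind> N) f = (\<integral>x. integral\<^sup>L (N x) f \<partial>M)"
proof -
  have N'[measurable]: "N \<in> M \<rightarrow>\<^sub>M subprob_algebra B" using N by (rule measurable_prob_algebraD)
  define P where "P x = (\<integral>\<^sup>+y. ennreal (f y) \<partial>N x)" for x
  define Q where "Q x = (\<integral>\<^sup>+y. ennreal (- f y) \<partial>N x)" for x
  have Pm[measurable]: "P \<in> borel_measurable M" unfolding P_def
    by (rule measurable_compose[OF N' nn_integral_measurable_subprob_algebra]) simp
  have Qm[measurable]: "Q \<in> borel_measurable M" unfolding Q_def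
    by (rule measurable_compose[OF N' nn_integral_measurable_subprob_algebra]) simp
  have sb: "sets (M \<bind> N) = sets B"
    using sets_kernel[OF N'] Mne by (rule sets_bind)
  have fb[measurable]: "f \<in> borel_measurable (M \<bind> N)" using measurable_cong_sets[OF sb refl] f by blast
  have bndP: "(\<integral>\<^sup>+x. ennreal (f x) \<partial>(M \<bind> N)) = integral\<^sup>N M P"
    unfolding P_def by (rule nn_integral_bind[OF _ N']) simp
  have bndQ: "(\<integral>\<^sup>+x. ennreal (- f x) \<partial>(M \<bind> N)) = integral\<^sup>N M Q"
    unfolding Q_def by (rule nn_integral_bind[OF _ N']) simp
  have fin: "(\<integral>\<^sup>+x. ennreal (norm (f x)) \<partial>(M \<bind> N)) < \<infinity>"
    using int by (simp add: integrable_iff_bounded)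
  have finP: "integral\<^sup>N M P < \<infinity>"
  proof -
    have "(\<integral>\<^sup>+x. ennreal (f x) \<partial>(M \<bind> N)) \<le> (\<integral>\<^sup>+x. ennreal (norm (f x)) \<partial>(M \<bind> N))"
      by (intro nn_integral_mono) (simp add: ennreal_leI)
    then show ?thesis using fin bndP by simp
  qed
  have finQ: "integral\<^sup>N M Q < \<infinity>"
  proof -
    have "(\<integral>\<^sup>+x. ennreal (- f x) \<partial>(M \<bind> N)) \<le> (\<integral>\<^sup>+x. ennreal (norm (f x)) \<partial>(M \<bind> N))"
      by (intro nn_integral_mono) (simp add: ennreal_leI)
    then show ?thesis using fin bndQ by simp
  qed
  have aeP: "AE x in M. P x \<noteq> \<infinity>" using finP by (intro nn_integral_PInf_AE) auto
  have aeQ: "AE x in M. Q x \<noteq> \<infinity>" using finQ by (intro nn_integral_PInf_AE) auto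
  have inner: "integral\<^sup>L (N x) f = enn2real (P x) - enn2real (Q x)"
    if x: "x \<in> space M" and Px: "P x \<noteq> \<infinity>" and Qx: "Q x \<noteq> \<infinity>" for x
  proof -
    have sN: "sets (N x) = sets B" using sets_kernel[OF N' x] .
    have fN[measurable]: "f \<in> borel_measurable (N x)" using measurable_cong_sets[OF sN refl] f by blast
    have "(\<integral>\<^sup>+y. ennreal (norm (f y)) \<partial>N x) = P x + Q x"
      unfolding P_def Q_def real_norm_def ennreal_abs_split
      by (rule nn_integral_add) auto
    then have "integrable (N x) f" using Px Qx by (simp add: integrable_iff_bounded less_top)
    then show ?thesis unfolding P_def Q_def by (rule real_lebesgue_integral_def)
  qed
  have intP: "integrable M (\<lambda>x. enn2real (P x))"
  proof -
    have "(\<integral>\<^sup>+x. ennreal (norm (enn2real (P x))) \<partial>M) \<le> integral\<^sup>N M P"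
      by (intro nn_integral_mono) (simp add: ennreal_enn2real_if)
    then show ?thesis using finP by (simp add: integrable_iff_bounded)
  qed
  have intQ: "integrable M (\<lambda>x. enn2real (Q x))"
  proof -
    have "(\<integral>\<^sup>+x. ennreal (norm (enn2real (Q x))) \<partial>M) \<le> integral\<^sup>N M Q"
      by (intro nn_integral_mono) (simp add: ennreal_enn2real_if)
    then show ?thesis using finQ by (simp add: integrable_iff_bounded)
  qed
  have eP: "(\<integral>x. enn2real (P x) \<partial>M) = enn2real (integral\<^sup>N M P)"
  proof -
    have "(\<integral>x. enn2real (P x) \<partial>M) = enn2real (\<integral>\<^sup>+x. ennreal (enn2real (P x)) \<partial>M)"
      by (rule integral_eq_nn_integral) auto
    also have "(\<integral>\<^sup>+x. ennreal (enn2real (P x)) \<partial>M) = integral\<^sup>N M P"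
      by (rule nn_integral_cong_AE) (use aeP in \<open>auto simp: less_top\<close>)
    finally show ?thesis .
  qed
  have eQ: "(\<integral>x. enn2real (Q x) \<partial>M) = enn2real (integral\<^sup>N M Q)"
  proof -
    have "(\<integral>x. enn2real (Q x) \<partial>M) = enn2real (\<integral>\<^sup>+x. ennreal (enn2real (Q x)) \<partial>M)"
      by (rule integral_eq_nn_integral) auto
    also have "(\<integral>\<^sup>+x. ennreal (enn2real (Q x)) \<partial>M) = integral\<^sup>N M Q"
      by (rule nn_integral_cong_AE) (use aeQ in \<open>auto simp: less_top\<close>)
    finally show ?thesis .
  qed
  have "(\<integral>x. integral\<^sup>L (N x) f \<partial>M) = (\<integral>x. enn2real (P x) - enn2real (Q x) \<partial>M)"
    by (rule integral_cong_AE) (use aeP aeQ inner in \<open>auto\<close>)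
  also have "\<dots> = (\<integral>x. enn2real (P x) \<partial>M) - (\<integral>x. enn2real (Q x) \<partial>M)"
    by (rule Bochner_Integration.integral_diff[OF intP intQ])
  also have "\<dots> = integral\<^sup>L (M \<bind> N) f"
    unfolding eP eQ real_lebesgue_integral_def[OF int] bndP bndQ ..
  finally show ?thesis ..
qed



definition Phi :: "('s::euclidean_space \<Rightarrow> 'a::euclidean_space measure) \<Rightarrow> 's \<times> 's \<Rightarrow> (('s \<times> 'a) \<times> ('s \<times> 'a)) measure" where
  "Phi \<pi> k = distr (\<pi> (fst k) \<Otimes>\<^sub>M \<pi> (snd k)) borel (\<lambda>(ah, a). ((fst k, ah), (snd k, a)))"

definition Psi :: "('s::euclidean_space \<Rightarrow> 'a::euclidean_space measure) \<Rightarrow> 's \<Rightarrow> ('s \<times> 'a) measure" where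
  "Psi \<pi> x = distr (\<pi> x) borel (\<lambda>a. (x, a))"

definition Dk :: "('s::euclidean_space \<times> 'a::euclidean_space \<Rightarrow> 's measure) \<Rightarrow> ('s \<times> 'a \<Rightarrow> 's) \<Rightarrow> ('s \<times> 'a) \<times> ('s \<times> 'a) \<Rightarrow> ('s \<times> 's) measure" where
  "Dk p f w = distr (p (fst w)) borel (\<lambda>sh'. (sh', sh' + f (snd w) - f (fst w)))"

lemma Phi_meas:
  assumes [measurable]: "\<pi> \<in> borel \<rightarrow>\<^sub>M prob_algebra borel"
  shows "Phi \<pi> \<in> borel \<rightarrow>\<^sub>M prob_algebra borel"
  unfolding Phi_def[abs_def] borel_prod[symmetric] by measurable

lemma Psi_meas:
  assumes [measurable]: "\<pi> \<in> borel \<rightarrow>\<^sub>M prob_algebra borel"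
  shows "Psi \<pi> \<in> borel \<rightarrow>\<^sub>M prob_algebra borel"
  unfolding Psi_def[abs_def] borel_prod[symmetric] by measurable

lemma Dk_meas:
  assumes [measurable]: "p \<in> borel \<rightarrow>\<^sub>M prob_algebra borel" "f \<in> borel_measurable borel"
  shows "Dk p f \<in> borel \<rightarrow>\<^sub>M prob_algebra borel"
proof -
  have [measurable]: "f \<in> borel_measurable (borel \<Otimes>\<^sub>M borel)" "p \<in> borel \<Otimes>\<^sub>M borel \<rightarrow>\<^sub>M prob_algebra borel"
    using assms by (simp_all add: borel_prod)
  show ?thesis unfolding Dk_def[abs_def] borel_prod[symmetric] by measurable
qed

definition Kt where
  "Kt \<rho> \<pi> p f t = (case t of 0 \<Rightarrow> distr \<rho> borel (\<lambda>s. (s, s)) | Suc t' \<Rightarrow> opc_joint \<rho> \<pi> p f t' \<bind> Dk p f)"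

lemma bind_in_prob_algebra:
  assumes "K \<in> space (prob_algebra M)" "N \<in> M \<rightarrow>\<^sub>M prob_algebra L"
  shows "K \<bind> N \<in> space (prob_algebra L)"
  using prob_space_bind'[OF assms] sets_bind'[OF assms] by (simp add: space_prob_algebra)

lemma joint_struct:
  fixes \<rho> :: "'s::euclidean_space measure" and \<pi> :: "'s \<Rightarrow> 'a::euclidean_space measure"
  assumes rho: "\<rho> \<in> space (prob_algebra borel)"
    and pik[measurable]: "\<pi> \<in> borel \<rightarrow>\<^sub>M prob_algebra borel"
    and pk[measurable]: "p \<in> borel \<rightarrow>\<^sub>M prob_algebra borel"
    and fm[measurable]: "f \<in> borel_measurable borel"
  shows "opc_joint \<rho> \<pi> p f t \<in> space (prob_algebra borel) \<and> Kt \<rho> \<pi> p f t \<in> space (prob_algebra borel)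
    \<and> opc_joint \<rho> \<pi> p f t = Kt \<rho> \<pi> p f t \<bind> Phi \<pi>"
proof (induction t)
  have Ph: "Phi \<pi> \<in> borel \<rightarrow>\<^sub>M prob_algebra borel" by (rule Phi_meas[OF pik])
  have Ph': "Phi \<pi> \<in> borel \<rightarrow>\<^sub>M subprob_algebra borel" by (rule measurable_prob_algebraD[OF Ph])
  case 0
  have prho: "prob_space \<rho>" "sets \<rho> = sets borel" using rho by (auto simp: space_prob_algebra)
  have dm0: "(\<lambda>s::'s. (s, s)) \<in> borel \<rightarrow>\<^sub>M (borel :: ('s \<times> 's) measure)"
    unfolding borel_prod[symmetric] by measurable
  have dm: "(\<lambda>s. (s, s)) \<in> \<rho> \<rightarrow>\<^sub>M (borel :: ('s \<times> 's) measure)"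
    using dm0 measurable_cong_sets[OF prho(2) refl, where N="borel :: ('s \<times> 's) measure"] by simp
  have K0: "Kt \<rho> \<pi> p f 0 \<in> space (prob_algebra borel)"
    unfolding Kt_def using prho dm by (auto simp: space_prob_algebra intro!: prob_space.prob_space_distr)
  have "opc_joint \<rho> \<pi> p f 0 = \<rho> \<bind> (\<lambda>s0. Phi \<pi> (s0, s0))"
    by (simp add: opc_init_def Phi_def)
  also have "\<dots> = Kt \<rho> \<pi> p f 0 \<bind> Phi \<pi>"
    unfolding Kt_def using prob_space.not_empty[OF prho(1)]
    by (simp add: bind_distr[OF dm Ph'])
  finally show ?case using K0 bind_in_prob_algebra[OF K0 Ph] by simp
next
  have Ph: "Phi \<pi> \<in> borel \<rightarrow>\<^sub>M prob_algebra borel" by (rule Phi_meas[OF pik])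
  have Ph': "Phi \<pi> \<in> borel \<rightarrow>\<^sub>M subprob_algebra borel" by (rule measurable_prob_algebraD[OF Ph])
  have D: "Dk p f \<in> borel \<rightarrow>\<^sub>M prob_algebra borel" by (rule Dk_meas[OF pk fm])
  case (Suc t)
  define J where "J = opc_joint \<rho> \<pi> p f t"
  have J: "J \<in> space (prob_algebra borel)" unfolding J_def by (rule conjunct1[OF Suc.IH])
  have sJ: "sets J = sets borel" using J by (simp add: space_prob_algebra)
  have K: "Kt \<rho> \<pi> p f (Suc t) \<in> space (prob_algebra borel)"
    using bind_in_prob_algebra[OF J D] unfolding Kt_def J_def by simp
  have pw: "p (sh, ah) \<bind> (\<lambda>sh'. let s' = sh' + f (s, a) - f (sh, ah) in
        distr (\<pi> sh' \<Otimes>\<^sub>M \<pi> s') borel (\<lambda>(ah', a'). ((sh', ah'), (s', a'))))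
    = Dk p f ((sh, ah), (s, a)) \<bind> Phi \<pi>" for sh ah s a
  proof -
    have pp: "prob_space (p (sh, ah))" "sets (p (sh, ah)) = sets borel"
      using measurable_space[OF pk, of "(sh, ah)"] by (auto simp: space_prob_algebra)
    have gm0: "(\<lambda>sh'. (sh', sh' + f (s, a) - f (sh, ah))) \<in> borel \<rightarrow>\<^sub>M (borel :: ('s \<times> 's) measure)"
      unfolding borel_prod[symmetric] by measurable
    have gm: "(\<lambda>sh'. (sh', sh' + f (s, a) - f (sh, ah))) \<in> p (sh, ah) \<rightarrow>\<^sub>M (borel :: ('s \<times> 's) measure)"
      using gm0 measurable_cong_sets[OF pp(2) refl, where N="borel :: ('s \<times> 's) measure"] by simp
    show ?thesis unfolding Dk_def
      by (simp add: bind_distr[OF gm Ph' prob_space.not_empty[OF pp(1)]] Phi_def Let_def)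
  qed
  have "opc_joint \<rho> \<pi> p f (Suc t) = J \<bind> (\<lambda>w. Dk p f w \<bind> Phi \<pi>)"
    unfolding J_def opc_joint.simps opc_step_def
    by (rule bind_cong_All) (force simp: pw split: prod.splits)
  also have "\<dots> = (J \<bind> Dk p f) \<bind> Phi \<pi>"
  proof (rule bind_assoc[symmetric])
    show "Dk p f \<in> J \<rightarrow>\<^sub>M subprob_algebra borel"
      using measurable_prob_algebraD[OF D] measurable_cong_sets[OF sJ refl] by blast
  qed (rule Ph')
  finally show ?case using K bind_in_prob_algebra[OF K Ph] unfolding Kt_def J_def by simp
qed

lemma distr_pair_snd_prob:
  assumes pm: "prob_space M" and pn: "prob_space N"
  shows "distr (M \<Otimes>\<^sub>M N) N snd = N"
proof (rule measure_eqI)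
  interpret m: prob_space M by fact
  interpret n: prob_space N by fact
  show "sets (distr (M \<Otimes>\<^sub>M N) N snd) = sets N" by simp
  fix A assume "A \<in> sets (distr (M \<Otimes>\<^sub>M N) N snd)"
  then have A: "A \<in> sets N" by simp
  have "emeasure (distr (M \<Otimes>\<^sub>M N) N snd) A = emeasure (M \<Otimes>\<^sub>M N) (snd -` A \<inter> space (M \<Otimes>\<^sub>M N))"
    using A by (subst emeasure_distr) auto
  also have "snd -` A \<inter> space (M \<Otimes>\<^sub>M N) = space M \<times> A"
    using sets.sets_into_space[OF A] by (auto simp: space_pair_measure)
  also have "emeasure (M \<Otimes>\<^sub>M N) (space M \<times> A) = emeasure M (space M) * emeasure N A"
    using A by (intro n.emeasure_pair_measure_Times) auto
  finally show "emeasure (distr (M \<Otimes>\<^sub>M N) N snd) A = emeasure N A"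
    by (simp add: m.emeasure_space_1)
qed

lemma fst_meas_prod: "fst \<in> (borel :: ('x::second_countable_topology \<times> 'y::second_countable_topology) measure) \<rightarrow>\<^sub>M borel"
  unfolding borel_prod[symmetric] by measurable

lemma snd_meas_prod: "snd \<in> (borel :: ('x::second_countable_topology \<times> 'y::second_countable_topology) measure) \<rightarrow>\<^sub>M borel"
  unfolding borel_prod[symmetric] by measurable

lemma Psi_fst:
  fixes \<pi> :: "'s::euclidean_space \<Rightarrow> 'a::euclidean_space measure"
  assumes pik[measurable]: "\<pi> \<in> borel \<rightarrow>\<^sub>M prob_algebra borel"
    and mu: "\<mu> \<in> space (prob_algebra borel)"
  shows "distr (\<mu> \<bind> Psi \<pi>) borel fst = \<mu>"
proof -
  have pm: "prob_space \<mu>" "sets \<mu> = sets borel" using mu by (auto simp: space_prob_algebra)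
  have Ps: "Psi \<pi> \<in> \<mu> \<rightarrow>\<^sub>M subprob_algebra borel"
    using measurable_prob_algebraD[OF Psi_meas[OF pik]] measurable_cong_sets[OF pm(2) refl] by blast
  have "distr (\<mu> \<bind> Psi \<pi>) borel fst = \<mu> \<bind> (\<lambda>x. distr (Psi \<pi> x) borel fst)"
    by (rule distr_bind[OF Ps prob_space.not_empty[OF pm(1)] fst_meas_prod])
  also have "\<dots> = \<mu> \<bind> return borel"
  proof (rule bind_cong_All, intro ballI)
    fix x assume "x \<in> space \<mu>"
    have pp: "prob_space (\<pi> x)" "sets (\<pi> x) = sets borel"
      using measurable_space[OF pik, of x] by (auto simp: space_prob_algebra)
    have pm2: "(\<lambda>a. (x, a)) \<in> \<pi> x \<rightarrow>\<^sub>M (borel :: ('s \<times> 'a) measure)"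
    proof -
      have "(\<lambda>a. (x, a)) \<in> borel \<rightarrow>\<^sub>M (borel :: ('s \<times> 'a) measure)"
        unfolding borel_prod[symmetric] by measurable
      then show ?thesis using measurable_cong_sets[OF pp(2) refl, where N="borel :: ('s \<times> 'a) measure"] by simp
    qed
    have "distr (Psi \<pi> x) borel fst = distr (\<pi> x) borel (fst \<circ> (\<lambda>a. (x, a)))"
      unfolding Psi_def by (rule distr_distr[OF fst_meas_prod pm2])
    also have "\<dots> = distr (\<pi> x) borel (\<lambda>a. x)" by (simp add: comp_def)
    also have "\<dots> = return borel x" by (rule prob_space.distr_const[OF pp(1)]) simp
    finally show "distr (Psi \<pi> x) borel fst = return borel x" .
  qed
  also have "\<dots> = \<mu>" by (rule bind_return''[OF pm(2)])
  finally show ?thesis .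
qed

lemma Phi_marg:
  fixes \<pi> :: "'s::euclidean_space \<Rightarrow> 'a::euclidean_space measure"
  assumes pik[measurable]: "\<pi> \<in> borel \<rightarrow>\<^sub>M prob_algebra borel"
    and K: "K \<in> space (prob_algebra borel)"
  shows "distr (K \<bind> Phi \<pi>) borel fst = distr K borel fst \<bind> Psi \<pi>"
    "distr (K \<bind> Phi \<pi>) borel snd = distr K borel snd \<bind> Psi \<pi>"
proof -
  have pK: "prob_space K" "sets K = sets borel" using K by (auto simp: space_prob_algebra)
  have Ph: "Phi \<pi> \<in> K \<rightarrow>\<^sub>M subprob_algebra borel"
    using measurable_prob_algebraD[OF Phi_meas[OF pik]] measurable_cong_sets[OF pK(2) refl] by blast
  have Ps: "Psi \<pi> \<in> borel \<rightarrow>\<^sub>M subprob_algebra borel"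
    using measurable_prob_algebraD[OF Psi_meas[OF pik]] .
  have fK: "fst \<in> K \<rightarrow>\<^sub>M (borel :: 's measure)" "snd \<in> K \<rightarrow>\<^sub>M (borel :: 's measure)"
    using fst_meas_prod snd_meas_prod measurable_cong_sets[OF pK(2) refl, where N="borel :: 's measure"] by auto
  have ne: "space K \<noteq> {}" using prob_space.not_empty[OF pK(1)] .
  have pp: "prob_space (\<pi> x)" "sets (\<pi> x) = sets borel" for x
    using measurable_space[OF pik, of x] by (auto simp: space_prob_algebra)
  have sp: "sets (\<pi> x \<Otimes>\<^sub>M \<pi> y) = sets (borel \<Otimes>\<^sub>M borel)" for x y
    by (rule sets_pair_measure_cong[OF pp(2) pp(2)])
  have hm: "(\<lambda>(ah, a). ((x, ah), (y, a))) \<in> \<pi> x \<Otimes>\<^sub>M \<pi> y \<rightarrow>\<^sub>M (borel :: (('s \<times> 'a) \<times> ('s \<times> 'a)) measure)" for x y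
  proof -
    have "(\<lambda>(ah, a). ((x, ah), (y, a))) \<in> borel \<Otimes>\<^sub>M borel \<rightarrow>\<^sub>M (borel :: (('s \<times> 'a) \<times> ('s \<times> 'a)) measure)"
      unfolding borel_prod[symmetric] by measurable
    then show ?thesis using measurable_cong_sets[OF sp refl, where N="borel :: (('s \<times> 'a) \<times> ('s \<times> 'a)) measure"] by simp
  qed
  have pairm: "(\<lambda>a. (x, a)) \<in> (borel :: 'a measure) \<rightarrow>\<^sub>M (borel :: ('s \<times> 'a) measure)" for x
    unfolding borel_prod[symmetric] by measurable
  have ff: "fst \<in> \<pi> x \<Otimes>\<^sub>M \<pi> y \<rightarrow>\<^sub>M \<pi> x" "snd \<in> \<pi> x \<Otimes>\<^sub>M \<pi> y \<rightarrow>\<^sub>M \<pi> y" for x y by auto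
  have pairm': "(\<lambda>a. (x, a)) \<in> \<pi> z \<rightarrow>\<^sub>M (borel :: ('s \<times> 'a) measure)" for x z
    using pairm measurable_cong_sets[OF pp(2) refl, where N="borel :: ('s \<times> 'a) measure"] by simp
  have e1: "distr (Phi \<pi> k) borel fst = Psi \<pi> (fst k)" for k
  proof -
    obtain x y where k: "k = (x, y)" by (metis prod.exhaust)
    have "distr (Phi \<pi> k) borel fst = distr (\<pi> x \<Otimes>\<^sub>M \<pi> y) borel (fst \<circ> (\<lambda>(ah, a). ((x, ah), (y, a))))"
      unfolding Phi_def k fst_conv snd_conv by (rule distr_distr[OF fst_meas_prod hm])
    also have "\<dots> = distr (\<pi> x \<Otimes>\<^sub>M \<pi> y) borel ((\<lambda>a. (x, a)) \<circ> fst)"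
      by (intro arg_cong[where f="distr _ _"]) (auto simp: comp_def)
    also have "\<dots> = distr (distr (\<pi> x \<Otimes>\<^sub>M \<pi> y) (\<pi> x) fst) borel (\<lambda>a. (x, a))"
      by (rule distr_distr[OF pairm' ff(1), symmetric])
    also have "distr (\<pi> x \<Otimes>\<^sub>M \<pi> y) (\<pi> x) fst = \<pi> x"
      by (rule prob_space.distr_pair_fst[OF pp(1)])
    finally show ?thesis unfolding Psi_def k by simp
  qed
  have e2: "distr (Phi \<pi> k) borel snd = Psi \<pi> (snd k)" for k
  proof -
    obtain x y where k: "k = (x, y)" by (metis prod.exhaust)
    have "distr (Phi \<pi> k) borel snd = distr (\<pi> x \<Otimes>\<^sub>M \<pi> y) borel (snd \<circ> (\<lambda>(ah, a). ((x, ah), (y, a))))"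
      unfolding Phi_def k fst_conv snd_conv by (rule distr_distr[OF snd_meas_prod hm])
    also have "\<dots> = distr (\<pi> x \<Otimes>\<^sub>M \<pi> y) borel ((\<lambda>a. (y, a)) \<circ> snd)"
      by (intro arg_cong[where f="distr _ _"]) (auto simp: comp_def)
    also have "\<dots> = distr (distr (\<pi> x \<Otimes>\<^sub>M \<pi> y) (\<pi> y) snd) borel (\<lambda>a. (y, a))"
      by (rule distr_distr[OF pairm' ff(2), symmetric])
    also have "distr (\<pi> x \<Otimes>\<^sub>M \<pi> y) (\<pi> y) snd = \<pi> y"
      by (rule distr_pair_snd_prob[OF pp(1) pp(1)])
    finally show ?thesis unfolding Psi_def k by simp
  qed
  have "distr (K \<bind> Phi \<pi>) borel fst = K \<bind> (\<lambda>k. distr (Phi \<pi> k) borel fst)"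
    by (rule distr_bind[OF Ph ne fst_meas_prod])
  also have "\<dots> = K \<bind> (\<lambda>k. Psi \<pi> (fst k))" unfolding e1 ..
  also have "\<dots> = distr K borel fst \<bind> Psi \<pi>"
    by (rule bind_distr[OF fK(1) Ps ne, symmetric])
  finally show "distr (K \<bind> Phi \<pi>) borel fst = distr K borel fst \<bind> Psi \<pi>" .
  have "distr (K \<bind> Phi \<pi>) borel snd = K \<bind> (\<lambda>k. distr (Phi \<pi> k) borel snd)"
    by (rule distr_bind[OF Ph ne snd_meas_prod])
  also have "\<dots> = K \<bind> (\<lambda>k. Psi \<pi> (snd k))" unfolding e2 ..
  also have "\<dots> = distr K borel snd \<bind> Psi \<pi>"
    by (rule bind_distr[OF fK(2) Ps ne, symmetric])
  finally show "distr (K \<bind> Phi \<pi>) borel snd = distr K borel snd \<bind> Psi \<pi>" .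
qed

lemma Psi_props:
  fixes \<pi> :: "'s::euclidean_space \<Rightarrow> 'a::euclidean_space measure"
  assumes pik[measurable]: "\<pi> \<in> borel \<rightarrow>\<^sub>M prob_algebra borel"
  shows "prob_space (Psi \<pi> x)" "sets (Psi \<pi> x) = sets borel"
    "integrable (\<pi> x) (\<lambda>a. (norm a)\<^sup>2) \<Longrightarrow> integrable (Psi \<pi> x) (\<lambda>z. (norm z)\<^sup>2)"
    "S \<in> sets borel \<Longrightarrow> A \<in> sets borel \<Longrightarrow> x \<in> S \<Longrightarrow> (AE a in \<pi> x. a \<in> A) \<Longrightarrow> AE z in Psi \<pi> x. z \<in> S \<times> A"
proof -
  have pp: "prob_space (\<pi> x)" "sets (\<pi> x) = sets borel"
    using measurable_space[OF pik, of x] by (auto simp: space_prob_algebra)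
  have pm: "(\<lambda>a. (x, a)) \<in> \<pi> x \<rightarrow>\<^sub>M (borel :: ('s \<times> 'a) measure)"
  proof -
    have "(\<lambda>a. (x, a)) \<in> borel \<rightarrow>\<^sub>M (borel :: ('s \<times> 'a) measure)"
      unfolding borel_prod[symmetric] by measurable
    then show ?thesis using measurable_cong_sets[OF pp(2) refl, where N="borel :: ('s \<times> 'a) measure"] by simp
  qed
  show "prob_space (Psi \<pi> x)" unfolding Psi_def by (rule prob_space.prob_space_distr[OF pp(1) pm])
  show "sets (Psi \<pi> x) = sets borel" unfolding Psi_def by simp
  show "integrable (Psi \<pi> x) (\<lambda>z. (norm z)\<^sup>2)" if "integrable (\<pi> x) (\<lambda>a. (norm a)\<^sup>2)"
  proof -
    interpret px: prob_space "\<pi> x" by (rule pp(1))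
    have "integrable (\<pi> x) (\<lambda>a. (norm x)\<^sup>2 + (norm a)\<^sup>2)" using that by auto
    then have "integrable (\<pi> x) (\<lambda>a. (norm (x, a))\<^sup>2)" by (simp add: norm_Pair)
    then show ?thesis unfolding Psi_def by (subst integrable_distr_eq[OF pm]) auto
  qed
  show "AE z in Psi \<pi> x. z \<in> S \<times> A" if S: "S \<in> sets borel" and A: "A \<in> sets borel" and x: "x \<in> S" and ae: "AE a in \<pi> x. a \<in> A"
  proof -
    have "AE a in \<pi> x. (x, a) \<in> S \<times> A" using ae x by auto
    moreover have "{z \<in> space (borel :: ('s \<times> 'a) measure). z \<in> S \<times> A} \<in> sets borel"
      using S A unfolding borel_prod[symmetric] by auto
    ultimately show ?thesis unfolding Psi_def
      by (subst AE_distr_iff[OF pm]) auto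
  qed
qed

lemma dist_sq_meas:
  "(\<lambda>z::('x::{second_countable_topology,metric_space}) \<times> 'x. (dist (fst z) (snd z))\<^sup>2) \<in> borel_measurable borel"
  by (intro borel_measurable_continuous_onI continuous_intros)

lemma g_lip:
  fixes \<pi> :: "'s::euclidean_space \<Rightarrow> 'a::euclidean_space measure" and r :: "'s \<times> 'a \<Rightarrow> real"
  assumes pik[measurable]: "\<pi> \<in> borel \<rightarrow>\<^sub>M prob_algebra borel"
    and S: "S \<in> sets borel" and A: "A \<in> sets borel"
    and pi_A: "\<forall>s\<in>S. AE a in \<pi> s. a \<in> A"
    and mom_pi: "\<forall>s\<in>S. integrable (\<pi> s) (\<lambda>a. (norm a)\<^sup>2)"
    and r_lip: "L_r-lipschitz_on (S \<times> A) r" and r_meas: "r \<in> borel_measurable borel"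
    and pi_lip: "\<forall>s\<in>S. \<forall>s'\<in>S. W2 (\<pi> s) (\<pi> s') \<le> L * dist s s'"
    and x: "x \<in> S" and y: "y \<in> S"
  shows "\<bar>integral\<^sup>L (Psi \<pi> x) r - integral\<^sup>L (Psi \<pi> y) r\<bar> \<le> L_r * sqrt (1 + L\<^sup>2) * dist x y"
proof -
  define X where "X = \<bar>integral\<^sup>L (Psi \<pi> x) r - integral\<^sup>L (Psi \<pi> y) r\<bar>"
  have pp: "prob_space (\<pi> z)" "sets (\<pi> z) = sets borel" for z
    using measurable_space[OF pik, of z] by (auto simp: space_prob_algebra)
  have Lr: "0 \<le> L_r" using r_lip lipschitz_on_nonneg by blast
  have mx: "integrable (\<pi> x) (\<lambda>a. (norm a)\<^sup>2)" and my: "integrable (\<pi> y) (\<lambda>a. (norm a)\<^sup>2)"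
    using mom_pi x y by auto
  have SA: "S \<times> A \<in> sets (borel :: ('s \<times> 'a) measure)"
    using S A unfolding borel_prod[symmetric] by auto
  have aex: "AE z in Psi \<pi> x. z \<in> S \<times> A" using Psi_props(4)[OF pik S A x] pi_A x by auto
  have aey: "AE z in Psi \<pi> y. z \<in> S \<times> A" using Psi_props(4)[OF pik S A y] pi_A y by auto
  have mPx: "integrable (Psi \<pi> x) (\<lambda>z. (norm z)\<^sup>2)" by (rule Psi_props(3)[OF pik mx])
  have mPy: "integrable (Psi \<pi> y) (\<lambda>z. (norm z)\<^sup>2)" by (rule Psi_props(3)[OF pik my])
  have pairm: "(\<lambda>a. (z, a)) \<in> (borel :: 'a measure) \<rightarrow>\<^sub>M (borel :: ('s \<times> 'a) measure)" for z
    unfolding borel_prod[symmetric] by measurable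
  have hm0: "(\<lambda>(u::'a, v::'a). ((x, u), (y, v))) \<in> borel \<Otimes>\<^sub>M borel \<rightarrow>\<^sub>M (borel :: (('s \<times> 'a) \<times> ('s \<times> 'a)) measure)"
    unfolding borel_prod[symmetric] by measurable
  have H: "X \<le> L_r * sqrt ((dist x y)\<^sup>2 + (\<integral>z. (dist (fst z) (snd z))\<^sup>2 \<partial>d))"
    if d: "d \<in> couplings (\<pi> x) (\<pi> y)" for d
  proof -
    have pd: "prob_space d" and sd: "sets d = sets (borel \<Otimes>\<^sub>M borel)"
      and d1: "distr d borel fst = \<pi> x" and d2: "distr d borel snd = \<pi> y"
      using d by (auto simp: couplings_def)
    define h :: "'a \<times> 'a \<Rightarrow> ('s \<times> 'a) \<times> ('s \<times> 'a)" where "h = (\<lambda>(u, v). ((x, u), (y, v)))"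
    have hm: "h \<in> d \<rightarrow>\<^sub>M (borel :: (('s \<times> 'a) \<times> ('s \<times> 'a)) measure)"
      using hm0 measurable_cong_sets[OF sd refl, where N="borel :: (('s \<times> 'a) \<times> ('s \<times> 'a)) measure"]
      unfolding h_def by simp
    have fd: "fst \<in> d \<rightarrow>\<^sub>M (borel :: 'a measure)" "snd \<in> d \<rightarrow>\<^sub>M (borel :: 'a measure)"
      using measurable_cong_sets[OF sd refl, where N="borel :: 'a measure"] by auto
    define d' where "d' = distr d borel h"
    have "distr d' borel fst = distr d borel (fst \<circ> h)"
      unfolding d'_def by (rule distr_distr[OF fst_meas_prod hm])
    also have "\<dots> = distr d borel ((\<lambda>a. (x, a)) \<circ> fst)"
      by (intro arg_cong[where f="distr _ _"]) (auto simp: comp_def h_def)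
    also have "\<dots> = distr (distr d borel fst) borel (\<lambda>a. (x, a))"
      by (rule distr_distr[OF pairm fd(1), symmetric])
    finally have e1: "distr d' borel fst = Psi \<pi> x" unfolding d1 Psi_def .
    have "distr d' borel snd = distr d borel (snd \<circ> h)"
      unfolding d'_def by (rule distr_distr[OF snd_meas_prod hm])
    also have "\<dots> = distr d borel ((\<lambda>a. (y, a)) \<circ> snd)"
      by (intro arg_cong[where f="distr _ _"]) (auto simp: comp_def h_def)
    also have "\<dots> = distr (distr d borel snd) borel (\<lambda>a. (y, a))"
      by (rule distr_distr[OF pairm fd(2), symmetric])
    finally have e2: "distr d' borel snd = Psi \<pi> y" unfolding d2 Psi_def .
    have d'c: "d' \<in> couplings (Psi \<pi> x) (Psi \<pi> y)"
      unfolding couplings_def using e1 e2 prob_space.prob_space_distr[OF pd hm]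
      by (auto simp: d'_def sets_borel_pair)
    have Xb: "X \<le> L_r * sqrt (\<integral>z. (dist (fst z) (snd z))\<^sup>2 \<partial>d')"
      unfolding X_def by (rule coupling_bound(2)[OF d'c mPx mPy SA aex aey r_lip r_meas])
    have ic: "integrable d (\<lambda>z. (dist (fst z) (snd z))\<^sup>2)"
      by (rule coupling_cost_integrable[OF d mx my])
    interpret pd: prob_space d by (rule pd)
    have "(\<integral>z. (dist (fst z) (snd z))\<^sup>2 \<partial>d') = (\<integral>z. (dist (fst (h z)) (snd (h z)))\<^sup>2 \<partial>d)"
      unfolding d'_def by (rule integral_distr[OF hm dist_sq_meas])
    also have "\<dots> = (\<integral>z. (dist x y)\<^sup>2 + (dist (fst z) (snd z))\<^sup>2 \<partial>d)"
      by (intro Bochner_Integration.integral_cong refl) (auto simp: h_def dist_Pair_Pair split: prod.splits)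
    also have "\<dots> = (dist x y)\<^sup>2 + (\<integral>z. (dist (fst z) (snd z))\<^sup>2 \<partial>d)"
      using ic by (simp add: pd.prob_space)
    finally show ?thesis using Xb by simp
  qed
  have "X \<le> L_r * sqrt ((dist x y)\<^sup>2 + (W2 (\<pi> x) (\<pi> y))\<^sup>2)"
    by (rule W2_bound[OF pp pp mx my Lr zero_le_power2 H])
  also have "\<dots> \<le> L_r * sqrt ((1 + L\<^sup>2) * (dist x y)\<^sup>2)"
  proof -
    have w0: "0 \<le> W2 (\<pi> x) (\<pi> y)" unfolding W2_def by simp
    have "W2 (\<pi> x) (\<pi> y) \<le> L * dist x y" using pi_lip x y by auto
    then have "(W2 (\<pi> x) (\<pi> y))\<^sup>2 \<le> (L * dist x y)\<^sup>2" using w0 by (intro power_mono) auto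
    then have "(dist x y)\<^sup>2 + (W2 (\<pi> x) (\<pi> y))\<^sup>2 \<le> (1 + L\<^sup>2) * (dist x y)\<^sup>2"
      by (simp add: algebra_simps power_mult_distrib)
    then show ?thesis using Lr by (intro mult_left_mono real_sqrt_le_mono) auto
  qed
  also have "\<dots> = L_r * sqrt (1 + L\<^sup>2) * dist x y"
    by (simp add: real_sqrt_mult)
  finally show ?thesis unfolding X_def .
qed



lemma pred_mem: "A \<in> sets N \<Longrightarrow> Measurable.pred N (\<lambda>x. x \<in> A)"
  using pred_sets2[of A N "\<lambda>x. x" N] by simp

lemma ref_AE:
  fixes \<rho> :: "'s::euclidean_space measure" and \<pi> :: "'s \<Rightarrow> 'a::euclidean_space measure"
  assumes rho: "\<rho> \<in> space (prob_algebra borel)"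
    and pik[measurable]: "\<pi> \<in> borel \<rightarrow>\<^sub>M prob_algebra borel"
    and pk[measurable]: "p \<in> borel \<rightarrow>\<^sub>M prob_algebra borel"
    and fm[measurable]: "f \<in> borel_measurable borel"
    and S: "S \<in> sets borel" and A: "A \<in> sets borel"
    and rho_S: "AE s in \<rho>. s \<in> S"
    and pi_A: "\<forall>s\<in>S. AE a in \<pi> s. a \<in> A"
    and p_S: "\<forall>s\<in>S. \<forall>a\<in>A. AE s' in p (s, a). s' \<in> S"
  shows "AE x in distr (Kt \<rho> \<pi> p f t) borel fst. x \<in> S"
proof (induction t)
  case 0
  have prho: "prob_space \<rho>" "sets \<rho> = sets borel" using rho by (auto simp: space_prob_algebra)
  have dm0: "(\<lambda>s::'s. (s, s)) \<in> borel \<rightarrow>\<^sub>M (borel :: ('s \<times> 's) measure)"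
    unfolding borel_prod[symmetric] by measurable
  have dm: "(\<lambda>s. (s, s)) \<in> \<rho> \<rightarrow>\<^sub>M (borel :: ('s \<times> 's) measure)"
    using dm0 measurable_cong_sets[OF prho(2) refl, where N="borel :: ('s \<times> 's) measure"] by simp
  have "distr (Kt \<rho> \<pi> p f 0) borel fst = distr \<rho> borel (fst \<circ> (\<lambda>s. (s, s)))"
    unfolding Kt_def by (simp add: distr_distr[OF fst_meas_prod dm])
  also have "\<dots> = distr \<rho> borel (\<lambda>x. x)" by (simp add: comp_def)
  also have "\<dots> = \<rho>" by (rule distr_id2) (simp add: prho)
  finally have e0: "distr (Kt \<rho> \<pi> p f 0) borel fst = \<rho>" .
  show ?case unfolding e0 by (rule rho_S)
next
  case (Suc t)
  define J where "J = opc_joint \<rho> \<pi> p f t"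
  define K where "K = Kt \<rho> \<pi> p f t"
  have st: "J \<in> space (prob_algebra borel)" "K \<in> space (prob_algebra borel)" "J = K \<bind> Phi \<pi>"
    using joint_struct[OF rho pik pk fm, of t] unfolding J_def K_def by auto
  have pJ: "prob_space J" "sets J = sets borel" using st(1) by (auto simp: space_prob_algebra)
  have pK: "prob_space K" "sets K = sets borel" using st(2) by (auto simp: space_prob_algebra)
  define \<mu> where "\<mu> = distr K borel fst"
  have fK: "fst \<in> K \<rightarrow>\<^sub>M (borel :: 's measure)"
    using fst_meas_prod measurable_cong_sets[OF pK(2) refl, where N="borel :: 's measure"] by auto
  have mu: "\<mu> \<in> space (prob_algebra borel)" unfolding \<mu>_def using pK fK
    by (auto simp: space_prob_algebra intro!: prob_space.prob_space_distr)
  have smu: "sets \<mu> = sets borel" unfolding \<mu>_def by simp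
  have muS: "AE x in \<mu>. x \<in> S" using Suc unfolding \<mu>_def K_def .
  have dJ: "distr J borel fst = \<mu> \<bind> Psi \<pi>" unfolding st(3) \<mu>_def by (rule Phi_marg(1)[OF pik st(2)])
  have Ps: "Psi \<pi> \<in> \<mu> \<rightarrow>\<^sub>M subprob_algebra borel"
    using measurable_prob_algebraD[OF Psi_meas[OF pik]] measurable_cong_sets[OF smu refl] by blast
  have SA: "S \<times> A \<in> sets (borel :: ('s \<times> 'a) measure)"
    using S A unfolding borel_prod[symmetric] by auto
  have "AE z in \<mu> \<bind> Psi \<pi>. z \<in> S \<times> A"
    unfolding AE_bind[OF Ps pred_mem[OF SA]]
    using muS by eventually_elim (use Psi_props(4)[OF pik S A] pi_A in auto)
  then have "AE z in distr J borel fst. z \<in> S \<times> A" unfolding dJ .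
  moreover have fJ: "fst \<in> J \<rightarrow>\<^sub>M (borel :: ('s \<times> 'a) measure)"
    using fst_meas_prod measurable_cong_sets[OF pJ(2) refl, where N="borel :: ('s \<times> 'a) measure"] by auto
  ultimately have aeJ: "AE w in J. fst w \<in> S \<times> A"
    using SA by (subst (asm) AE_distr_iff) auto
  have D: "Dk p f \<in> J \<rightarrow>\<^sub>M subprob_algebra borel"
    using measurable_prob_algebraD[OF Dk_meas[OF pk fm]] measurable_cong_sets[OF pJ(2) refl] by blast
  have pf: "(\<lambda>w. p (fst w)) \<in> J \<rightarrow>\<^sub>M subprob_algebra borel"
    using measurable_compose[OF fJ measurable_prob_algebraD[OF pk]] .
  have "distr (Kt \<rho> \<pi> p f (Suc t)) borel fst = J \<bind> (\<lambda>w. distr (Dk p f w) borel fst)"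
    unfolding Kt_def J_def[symmetric] nat.case
    by (rule distr_bind[OF D prob_space.not_empty[OF pJ(1)] fst_meas_prod])
  also have "\<dots> = J \<bind> (\<lambda>w. p (fst w))"
  proof (rule bind_cong_All, intro ballI)
    fix w :: "('s \<times> 'a) \<times> ('s \<times> 'a)"
    have pp: "sets (p (fst w)) = sets borel"
      using measurable_space[OF pk, of "fst w"] by (auto simp: space_prob_algebra)
    have gm0: "(\<lambda>sh'. (sh', sh' + f (snd w) - f (fst w))) \<in> borel \<rightarrow>\<^sub>M (borel :: ('s \<times> 's) measure)"
      unfolding borel_prod[symmetric] by measurable
    have gm: "(\<lambda>sh'. (sh', sh' + f (snd w) - f (fst w))) \<in> p (fst w) \<rightarrow>\<^sub>M (borel :: ('s \<times> 's) measure)"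
      using gm0 measurable_cong_sets[OF pp refl, where N="borel :: ('s \<times> 's) measure"] by simp
    have "distr (Dk p f w) borel fst = distr (p (fst w)) borel (fst \<circ> (\<lambda>sh'. (sh', sh' + f (snd w) - f (fst w))))"
      unfolding Dk_def by (rule distr_distr[OF fst_meas_prod gm])
    also have "\<dots> = distr (p (fst w)) borel (\<lambda>x. x)" by (simp add: comp_def)
    also have "\<dots> = p (fst w)" by (rule distr_id2) (simp add: pp)
    finally show "distr (Dk p f w) borel fst = p (fst w)" .
  qed
  finally have eq: "distr (Kt \<rho> \<pi> p f (Suc t)) borel fst = J \<bind> (\<lambda>w. p (fst w))" .
  show ?case unfolding eq AE_bind[OF pf pred_mem[OF S]]
    using aeJ
  proof eventually_elim
    case (elim w)
    then obtain s a where w: "fst w = (s, a)" and sa: "s \<in> S" "a \<in> A" by (cases "fst w") auto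
    have "AE y in p (s, a). y \<in> S" using p_S sa by blast
    then show ?case unfolding w .
  qed
qed

lemma step_bound:
  fixes \<rho> :: "'s::euclidean_space measure" and \<pi> :: "'s \<Rightarrow> 'a::euclidean_space measure"
    and r :: "'s \<times> 'a \<Rightarrow> real"
  assumes rho: "\<rho> \<in> space (prob_algebra borel)"
    and pik[measurable]: "\<pi> \<in> borel \<rightarrow>\<^sub>M prob_algebra borel"
    and pk[measurable]: "p \<in> borel \<rightarrow>\<^sub>M prob_algebra borel"
    and fm[measurable]: "f \<in> borel_measurable borel"
    and r_meas: "r \<in> borel_measurable borel"
    and S: "S \<in> sets borel" and A: "A \<in> sets borel"
    and rho_S: "AE s in \<rho>. s \<in> S"
    and pi_A: "\<forall>s\<in>S. AE a in \<pi> s. a \<in> A"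
    and p_S: "\<forall>s\<in>S. \<forall>a\<in>A. AE s' in p (s, a). s' \<in> S"
    and mom_pi: "\<forall>s\<in>S. integrable (\<pi> s) (\<lambda>a. (norm a)\<^sup>2)"
    and r_lip: "L_r-lipschitz_on (S \<times> A) r"
    and pi_lip: "\<forall>s\<in>S. \<forall>s'\<in>S. W2 (\<pi> s) (\<pi> s') \<le> L * dist s s'"
    and optS: "AE z in opc_joint \<rho> \<pi> p f t. fst (snd z) \<in> S"
    and momJ: "integrable (opc_joint \<rho> \<pi> p f t) (\<lambda>z. (norm z)\<^sup>2)"
  shows "\<bar>(\<integral>z. r (fst z) \<partial>opc_joint \<rho> \<pi> p f t) - (\<integral>z. r (snd z) \<partial>opc_joint \<rho> \<pi> p f t)\<bar>
    \<le> L_r * sqrt (1 + L\<^sup>2) * W2 (law_ref_state \<rho> \<pi> p f t) (law_opc_state \<rho> \<pi> p f t)"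
proof -
  define J where "J = opc_joint \<rho> \<pi> p f t"
  define K where "K = Kt \<rho> \<pi> p f t"
  have st: "J \<in> space (prob_algebra borel)" "K \<in> space (prob_algebra borel)" "J = K \<bind> Phi \<pi>"
    using joint_struct[OF rho pik pk fm, of t] unfolding J_def K_def by auto
  have pJ: "prob_space J" "sets J = sets borel" using st(1) by (auto simp: space_prob_algebra)
  have pK: "prob_space K" "sets K = sets borel" using st(2) by (auto simp: space_prob_algebra)
  interpret J: prob_space J by (rule pJ(1))
  define \<mu> where "\<mu> = distr K borel fst"
  define \<nu> where "\<nu> = distr K borel snd"
  have fK: "fst \<in> K \<rightarrow>\<^sub>M (borel :: 's measure)" "snd \<in> K \<rightarrow>\<^sub>M (borel :: 's measure)"
    using fst_meas_prod snd_meas_prod measurable_cong_sets[OF pK(2) refl, where N="borel :: 's measure"] by auto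
  have mu: "\<mu> \<in> space (prob_algebra borel)" unfolding \<mu>_def using pK fK
    by (auto simp: space_prob_algebra intro!: prob_space.prob_space_distr)
  have nu: "\<nu> \<in> space (prob_algebra borel)" unfolding \<nu>_def using pK fK
    by (auto simp: space_prob_algebra intro!: prob_space.prob_space_distr)
  have pmu: "prob_space \<mu>" "sets \<mu> = sets borel" using mu by (auto simp: space_prob_algebra)
  have pnu: "prob_space \<nu>" "sets \<nu> = sets borel" using nu by (auto simp: space_prob_algebra)
  have dJ1: "distr J borel fst = \<mu> \<bind> Psi \<pi>" unfolding st(3) \<mu>_def by (rule Phi_marg(1)[OF pik st(2)])
  have dJ2: "distr J borel snd = \<nu> \<bind> Psi \<pi>" unfolding st(3) \<nu>_def by (rule Phi_marg(2)[OF pik st(2)])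
  have fJ: "fst \<in> J \<rightarrow>\<^sub>M (borel :: ('s \<times> 'a) measure)" "snd \<in> J \<rightarrow>\<^sub>M (borel :: ('s \<times> 'a) measure)"
    using fst_meas_prod snd_meas_prod measurable_cong_sets[OF pJ(2) refl, where N="borel :: ('s \<times> 'a) measure"] by auto
  have ffJ: "(\<lambda>z. fst (fst z)) \<in> J \<rightarrow>\<^sub>M (borel :: 's measure)"
    using measurable_compose[OF fJ(1) fst_meas_prod] .
  have fsJ: "(\<lambda>z. fst (snd z)) \<in> J \<rightarrow>\<^sub>M (borel :: 's measure)"
    using measurable_compose[OF fJ(2) fst_meas_prod] .
  have law1: "law_ref_state \<rho> \<pi> p f t = \<mu>"
  proof -
    have "law_ref_state \<rho> \<pi> p f t = distr J borel (fst \<circ> fst)"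
      unfolding law_ref_state_def J_def by (simp add: comp_def)
    also have "\<dots> = distr (distr J borel fst) borel fst"
      by (rule distr_distr[OF fst_meas_prod fJ(1), symmetric])
    also have "\<dots> = \<mu>" unfolding dJ1 by (rule Psi_fst[OF pik mu])
    finally show ?thesis .
  qed
  have law2: "law_opc_state \<rho> \<pi> p f t = \<nu>"
  proof -
    have "law_opc_state \<rho> \<pi> p f t = distr J borel (fst \<circ> snd)"
      unfolding law_opc_state_def J_def by (simp add: comp_def)
    also have "\<dots> = distr (distr J borel snd) borel fst"
      by (rule distr_distr[OF fst_meas_prod fJ(2), symmetric])
    also have "\<dots> = \<nu>" unfolding dJ2 by (rule Psi_fst[OF pik nu])
    finally show ?thesis .
  qed
  have muS: "AE x in \<mu> . x \<in> S" unfolding \<mu>_def K_def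
    by (rule ref_AE[OF rho pik pk fm S A rho_S pi_A p_S])
  have nuS: "AE x in \<nu> . x \<in> S"
  proof -
    have "AE x in law_opc_state \<rho> \<pi> p f t. x \<in> S" unfolding law_opc_state_def J_def[symmetric]
      using optS unfolding J_def[symmetric] using S by (subst AE_distr_iff[OF fsJ]) auto
    then show ?thesis unfolding law2 .
  qed
  have nz: "norm (fst (fst z)) \<le> norm z" "norm (fst (snd z)) \<le> norm z"
     "norm (fst z) \<le> norm z" "norm (snd z) \<le> norm z" for z :: "('s \<times> 'a) \<times> ('s \<times> 'a)"
  proof -
    obtain u v where z: "z = (u, v)" by (cases z)
    obtain u1 u2 where u: "u = (u1, u2)" by (cases u)
    obtain v1 v2 where v: "v = (v1, v2)" by (cases v)
    have "norm u \<le> norm z" "norm v \<le> norm z" using norm_fst_le[of u v] norm_snd_le[where x=u and y=v] z by auto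
    moreover have "norm u1 \<le> norm u" "norm v1 \<le> norm v"
      using norm_fst_le[of u1 u2] norm_fst_le[of v1 v2] u v by auto
    ultimately show "norm (fst (fst z)) \<le> norm z" "norm (fst (snd z)) \<le> norm z"
     "norm (fst z) \<le> norm z" "norm (snd z) \<le> norm z" using z u v by auto
  qed
  have momB: "integrable J (\<lambda>z. (norm (h z))\<^sup>2)"
    if hm: "h \<in> J \<rightarrow>\<^sub>M borel" and hb: "\<And>z. norm (h z) \<le> norm z" for h :: "_ \<Rightarrow> 'x::euclidean_space"
  proof (rule Bochner_Integration.integrable_bound[OF momJ[folded J_def]])
    show "(\<lambda>z. (norm (h z))\<^sup>2) \<in> borel_measurable J" using hm by measurable
    show "AE x in J. norm ((norm (h x))\<^sup>2) \<le> norm ((norm x)\<^sup>2)"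
      using hb by (auto intro!: power_mono)
  qed
  have mmu: "integrable \<mu> (\<lambda>x. (norm x)\<^sup>2)"
    unfolding law1[symmetric] law_ref_state_def J_def[symmetric]
    using momB[OF ffJ nz(1)] by (subst integrable_distr_eq[OF ffJ]) auto
  have mnu: "integrable \<nu> (\<lambda>x. (norm x)\<^sup>2)"
    unfolding law2[symmetric] law_opc_state_def J_def[symmetric]
    using momB[OF fsJ nz(2)] by (subst integrable_distr_eq[OF fsJ]) auto
  have SA: "S \<times> A \<in> sets (borel :: ('s \<times> 'a) measure)"
    using S A unfolding borel_prod[symmetric] by auto
  define g where "g x = integral\<^sup>L (Psi \<pi> x) r" for x
  have Lr: "0 \<le> L_r" using r_lip lipschitz_on_nonneg by blast
  define Kc where "Kc = L_r * sqrt (1 + L\<^sup>2)"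
  have Kc: "0 \<le> Kc" unfolding Kc_def using Lr by simp
  have glip: "Kc-lipschitz_on S g"
  proof (rule lipschitz_onI)
    fix x y assume "x \<in> S" "y \<in> S"
    then show "dist (g x) (g y) \<le> Kc * dist x y"
      unfolding g_def Kc_def dist_real_def
      by (rule g_lip[OF pik S A pi_A mom_pi r_lip r_meas pi_lip])
  qed (rule Kc)
  have gm: "g \<in> borel_measurable borel"
    unfolding g_def[abs_def]
    by (rule measurable_compose[OF measurable_prob_algebraD[OF Psi_meas[OF pik]] integral_measurable_subprob_algebra[OF r_meas]])
  have side: "(\<integral>z. r (h z) \<partial>J) = integral\<^sup>L \<rho>' g"
    if hJ: "h \<in> J \<rightarrow>\<^sub>M borel" and dh: "distr J borel h = \<rho>' \<bind> Psi \<pi>"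
      and rp: "\<rho>' \<in> space (prob_algebra borel)" and aeS: "AE x in \<rho>'. x \<in> S"
      and mh: "integrable J (\<lambda>z. (norm (h z))\<^sup>2)" for h \<rho>'
  proof -
    have prp: "prob_space \<rho>'" "sets \<rho>' = sets borel" using rp by (auto simp: space_prob_algebra)
    have Ps: "Psi \<pi> \<in> \<rho>' \<rightarrow>\<^sub>M prob_algebra borel"
      using Psi_meas[OF pik] measurable_cong_sets[OF prp(2) refl] by blast
    have Ps': "Psi \<pi> \<in> \<rho>' \<rightarrow>\<^sub>M subprob_algebra borel" using measurable_prob_algebraD[OF Ps] .
    have pb: "prob_space (\<rho>' \<bind> Psi \<pi>)" "sets (\<rho>' \<bind> Psi \<pi>) = sets borel"
      unfolding dh[symmetric] using J.prob_space_distr[OF hJ] by auto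
    have mb: "integrable (\<rho>' \<bind> Psi \<pi>) (\<lambda>z. (norm z)\<^sup>2)"
      unfolding dh[symmetric] using mh by (subst integrable_distr_eq[OF hJ]) auto
    have ab: "AE z in \<rho>' \<bind> Psi \<pi>. z \<in> S \<times> A"
      unfolding AE_bind[OF Ps' pred_mem[OF SA]]
      using aeS by eventually_elim (use Psi_props(4)[OF pik S A] pi_A in auto)
    have ir: "integrable (\<rho>' \<bind> Psi \<pi>) r"
      by (rule lip_integrable[OF pb mb ab r_lip r_meas])
    have "(\<integral>z. r (h z) \<partial>J) = integral\<^sup>L (distr J borel h) r"
      by (rule integral_distr[OF hJ r_meas, symmetric])
    also have "\<dots> = integral\<^sup>L (\<rho>' \<bind> Psi \<pi>) r" unfolding dh ..
    also have "\<dots> = integral\<^sup>L \<rho>' g"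
      unfolding g_def by (rule integral_bind_real[OF Ps r_meas prob_space.not_empty[OF prp(1)] ir])
    finally show ?thesis .
  qed
  have e1: "(\<integral>z. r (fst z) \<partial>J) = integral\<^sup>L \<mu> g"
    by (rule side[OF fJ(1) dJ1 mu muS momB[OF fJ(1) nz(3)]])
  have e2: "(\<integral>z. r (snd z) \<partial>J) = integral\<^sup>L \<nu> g"
    by (rule side[OF fJ(2) dJ2 nu nuS momB[OF fJ(2) nz(4)]])
  have "\<bar>integral\<^sup>L \<mu> g - integral\<^sup>L \<nu> g\<bar> \<le> Kc * sqrt (0 + (W2 \<mu> \<nu>)\<^sup>2)"
  proof (rule W2_bound[OF pmu pnu mmu mnu Kc order_refl])
    fix c assume c: "c \<in> couplings \<mu> \<nu>"
    show "\<bar>integral\<^sup>L \<mu> g - integral\<^sup>L \<nu> g\<bar> \<le> Kc * sqrt (0 + (\<integral>z. (dist (fst z) (snd z))\<^sup>2 \<partial>c))"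
      using coupling_bound(2)[OF c mmu mnu S muS nuS glip gm] by simp
  qed
  also have "\<dots> = Kc * W2 \<mu> \<nu>" by (simp add: W2_def)
  finally show ?thesis unfolding J_def[symmetric] e1 e2 law1 law2 Kc_def .
qed


theorem lemma5:
  fixes S :: "'s::euclidean_space set" and A :: "'a::euclidean_space set"
    and \<rho> :: "'s measure" and \<pi> :: "'s \<Rightarrow> 'a measure" and p :: "'s \<times> 'a \<Rightarrow> 's measure"
    and f :: "'s \<times> 'a \<Rightarrow> 's" and r :: "'s \<times> 'a \<Rightarrow> real"
    and \<gamma> L_r L_\<pi> :: real and T :: nat
  assumes S_borel: "S \<in> sets borel" and A_borel: "A \<in> sets borel"
    and rho: "\<rho> \<in> space (prob_algebra borel)"
    and pi_kernel: "\<pi> \<in> borel \<rightarrow>\<^sub>M prob_algebra borel"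
    and p_kernel: "p \<in> borel \<rightarrow>\<^sub>M prob_algebra borel"
    and f_meas: "f \<in> borel_measurable borel"
    and r_meas: "r \<in> borel_measurable borel"
    and rho_S: "AE s in \<rho>. s \<in> S"
    and pi_A: "\<forall>s\<in>S. AE a in \<pi> s. a \<in> A"
    and p_S: "\<forall>s\<in>S. \<forall>a\<in>A. AE s' in p (s, a). s' \<in> S"
    and opc_in_S: "\<forall>t\<le>T. AE z in opc_joint \<rho> \<pi> p f t. fst (snd z) \<in> S"
    and gamma: "0 \<le> \<gamma>" "\<gamma> < 1"
    and mom_rho: "integrable \<rho> (\<lambda>s. (norm s)\<^sup>2)"
    and mom_pi: "\<forall>s\<in>S. integrable (\<pi> s) (\<lambda>a. (norm a)\<^sup>2)"
    and mom_p: "\<forall>s\<in>S. \<forall>a\<in>A. integrable (p (s, a)) (\<lambda>s'. (norm s')\<^sup>2)"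
    and mom_joint: "\<forall>t\<le>T. integrable (opc_joint \<rho> \<pi> p f t) (\<lambda>z. (norm z)\<^sup>2)"
    and r_lip: "L_r-lipschitz_on (S \<times> A) r"
    and pi_lip: "\<forall>s\<in>S. \<forall>s'\<in>S. W2 (\<pi> s) (\<pi> s') \<le> L_\<pi> * dist s s'"
  shows "\<bar>true_return \<rho> \<pi> p f r \<gamma> T - opc_return \<rho> \<pi> p f r \<gamma> T\<bar>
    \<le> L_r * sqrt (1 + L_\<pi>\<^sup>2) *
       (\<Sum>t\<le>T. \<gamma> ^ t * W2 (law_ref_state \<rho> \<pi> p f t) (law_opc_state \<rho> \<pi> p f t))"
proof -
  define Kc where "Kc = L_r * sqrt (1 + L_\<pi>\<^sup>2)"
  define a where "a t = (\<integral>z. r (fst z) \<partial>opc_joint \<rho> \<pi> p f t)" for t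
  define b where "b t = (\<integral>z. r (snd z) \<partial>opc_joint \<rho> \<pi> p f t)" for t
  define w where "w t = W2 (law_ref_state \<rho> \<pi> p f t) (law_opc_state \<rho> \<pi> p f t)" for t
  have bt: "\<bar>a t - b t\<bar> \<le> Kc * w t" if "t \<le> T" for t
    unfolding a_def b_def w_def Kc_def
    by (rule step_bound[OF rho pi_kernel p_kernel f_meas r_meas S_borel A_borel rho_S pi_A p_S mom_pi r_lip pi_lip])
       (use opc_in_S mom_joint that in auto)
  have "true_return \<rho> \<pi> p f r \<gamma> T - opc_return \<rho> \<pi> p f r \<gamma> T = (\<Sum>t\<le>T. \<gamma> ^ t * (a t - b t))"
    unfolding true_return_def opc_return_def a_def b_def
    by (simp add: sum_subtractf right_diff_distrib)
  then have "\<bar>true_return \<rho> \<pi> p f r \<gamma> T - opc_return \<rho> \<pi> p f r \<gamma> T\<bar> \<le> (\<Sum>t\<le>T. \<bar>\<gamma> ^ t * (a t - b t)\<bar>)"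
    by (simp add: sum_abs)
  also have "\<dots> \<le> (\<Sum>t\<le>T. \<gamma> ^ t * (Kc * w t))"
  proof (rule sum_mono)
    fix t assume "t \<in> {..T}"
    then have "\<bar>a t - b t\<bar> \<le> Kc * w t" using bt by auto
    then show "\<bar>\<gamma> ^ t * (a t - b t)\<bar> \<le> \<gamma> ^ t * (Kc * w t)"
      using gamma(1) by (simp add: abs_mult mult_left_mono)
  qed
  also have "\<dots> = Kc * (\<Sum>t\<le>T. \<gamma> ^ t * w t)"
    by (simp add: sum_distrib_left algebra_simps)
  finally show ?thesis unfolding Kc_def w_def .
qed

end
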